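(* Let $A\in\mathfrak{B}_{n\times m}$ with $r(A)=\langle x_1,\dots,x_n\rangle$, suppose $x_1=2^s-1$ for some integer $0\le s\le m$, and suppose $\zeta_1(A)=n$ (i.e. all rows of $A$ equal the first row). Then $A$ is canonical.
   Context: $\mathfrak{B}_{n\times m}$ denotes the set of all $n\times m$ matrices with entries in $\{0,1\}$. For $A=[a_{ij}]\in\mathfrak{B}_{n\times m}$, $r(A)=\langle x_1,\dots,x_n\rangle$ with $x_i=\sum_{j=1}^m a_{ij}2^{m-j}$; tuples are compared lexicographically. $\zeta_1(A)$ is the number of indices $k$ with $x_k=x_1$. $A\sim B$ means $A=XBY$ for permutation matrices $X,Y$. $A$ is canonical if $r(A)$ is the lexicographically minimal element of $\{r(B)\mid B\sim A\}$. *)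

theory Defs
  imports Main
begin

definition binmat :: "nat \<Rightarrow> nat \<Rightarrow> (nat \<Rightarrow> nat \<Rightarrow> nat) \<Rightarrow> bool" where
  "binmat n m A \<longleftrightarrow> (\<forall>i<n. \<forall>j<m. A i j \<in> {0, 1})"

text \<open>Row i encoded as sum_{j=1}^m a_ij 2^(m-j); with 0-based j this is 2^(m-1-j).\<close>
definition row_val :: "nat \<Rightarrow> (nat \<Rightarrow> nat \<Rightarrow> nat) \<Rightarrow> nat \<Rightarrow> nat" where
  "row_val m A i = (\<Sum>j<m. A i j * 2 ^ (m - 1 - j))"

definition rtuple :: "nat \<Rightarrow> nat \<Rightarrow> (nat \<Rightarrow> nat \<Rightarrow> nat) \<Rightarrow> nat list" where
  "rtuple n m A = map (row_val m A) [0..<n]"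

definition zeta1 :: "nat \<Rightarrow> nat \<Rightarrow> (nat \<Rightarrow> nat \<Rightarrow> nat) \<Rightarrow> nat" where
  "zeta1 n m A = card {k. k < n \<and> row_val m A k = row_val m A 0}"

text \<open>A = X B Y with permutation matrices X, Y: rows and columns of B permuted.\<close>
definition perm_equiv :: "nat \<Rightarrow> nat \<Rightarrow> (nat \<Rightarrow> nat \<Rightarrow> nat) \<Rightarrow> (nat \<Rightarrow> nat \<Rightarrow> nat) \<Rightarrow> bool" where
  "perm_equiv n m A B \<longleftrightarrow>
     (\<exists>\<sigma> \<tau>. bij_betw \<sigma> {..<n} {..<n} \<and> bij_betw \<tau> {..<m} {..<m} \<and>
        (\<forall>i<n. \<forall>j<m. A i j = B (\<sigma> i) (\<tau> j)))"

definition canonical :: "nat \<Rightarrow> nat \<Rightarrow> (nat \<Rightarrow> nat \<Rightarrow> nat) \<Rightarrow> bool" where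
  "canonical n m A \<longleftrightarrow>
     (\<forall>B. binmat n m B \<and> perm_equiv n m B A \<longrightarrow> lexordp_eq (rtuple n m A) (rtuple n m B))"

end

theory Submission
  imports Defs
begin

lemma lex_pointwise:
  "list_all2 (\<le>) (xs::nat list) ys \<Longrightarrow> lexordp_eq xs ys"
  by (induction xs ys rule: list_all2_induct) auto

lemma row_val_ones:
  assumes "\<forall>j<m. M i j \<in> {0,1}"
  shows "row_val m M i = (\<Sum>j\<in>{j. j<m \<and> M i j = 1}. 2 ^ (m - 1 - j))"
proof -
  have "row_val m M i = (\<Sum>j<m. if M i j = 1 then 2 ^ (m - 1 - j) else 0)"
    unfolding row_val_def
    by (rule sum.cong) (use assms in auto)
  also have "\<dots> = (\<Sum>j\<in>{..<m} \<inter> {j. M i j = 1}. 2 ^ (m - 1 - j))"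
    by (simp only: sum.inter_restrict[OF finite_lessThan]) (simp add: mem_Collect_eq)
  also have "{..<m} \<inter> {j. M i j = 1} = {j. j<m \<and> M i j = 1}" by auto
  finally show ?thesis .
qed

lemma reindex:
  assumes "S \<subseteq> {..<m}"
  shows "(\<Sum>j\<in>S. (2::nat) ^ (m - 1 - j)) = (\<Sum>e\<in>(\<lambda>j. m - 1 - j) ` S. 2 ^ e)"
    and "card ((\<lambda>j. m - 1 - j) ` S) = card S"
proof -
  have inj: "inj_on (\<lambda>j. m - 1 - j) S"
  proof (rule inj_onI)
    fix x y assume "x \<in> S" "y \<in> S" "m - 1 - x = m - 1 - y"
    moreover have "x < m" "y < m" using assms \<open>x \<in> S\<close> \<open>y \<in> S\<close> by auto
    ultimately show "x = y" by arith
  qed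
  show "(\<Sum>j\<in>S. (2::nat) ^ (m - 1 - j)) = (\<Sum>e\<in>(\<lambda>j. m - 1 - j) ` S. 2 ^ e)"
    by (subst sum.reindex[OF inj]) (simp add: comp_def)
  show "card ((\<lambda>j. m - 1 - j) ` S) = card S" by (rule card_image[OF inj])
qed

lemma geo: "(\<Sum>e<s. (2::nat) ^ e) = 2 ^ s - 1"
  by (induction s) auto

lemma sum_lower:
  "finite E \<Longrightarrow> (\<Sum>e\<in>E. (2::nat) ^ e) \<ge> 2 ^ card E - 1"
proof (induction "card E" arbitrary: E)
  case 0 then show ?case by simp
next
  case (Suc k)
  then have ne: "E \<noteq> {}" by auto
  define M where "M = Max E"
  have ME: "M \<in> E" using Suc ne M_def by auto
  have cE: "card (E - {M}) = k" using Suc ME by auto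
  have IH: "(\<Sum>e\<in>E - {M}. (2::nat) ^ e) \<ge> 2 ^ k - 1"
    using Suc cE by auto
  have "card (E - {M}) \<le> card {..<M}"
  proof (rule card_mono)
    show "E - {M} \<subseteq> {..<M}"
    proof
      fix x assume "x \<in> E - {M}"
      moreover have "x \<le> M" using Suc(3) \<open>x \<in> E - {M}\<close> M_def by simp
      ultimately show "x \<in> {..<M}" by auto
    qed
  qed simp
  hence "k \<le> M" using cE by simp
  hence "(2::nat) ^ k \<le> 2 ^ M" by simp
  have "(\<Sum>e\<in>E. (2::nat) ^ e) = 2 ^ M + (\<Sum>e\<in>E - {M}. 2 ^ e)"
    using Suc ME by (simp add: sum.remove)
  moreover have "(2::nat) ^ Suc k - 1 \<le> 2 ^ M + (2 ^ k - 1)"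
    using \<open>(2::nat) ^ k \<le> 2 ^ M\<close> by (simp only: power_Suc)
  ultimately show ?case using IH Suc(2) by simp
qed

lemma sum_exact:
  assumes "finite E" "(\<Sum>e\<in>E. (2::nat) ^ e) = 2 ^ s - 1"
  shows "card E = s"
proof -
  have sub: "E \<subseteq> {..<s}"
  proof
    fix x assume "x \<in> E"
    hence "(2::nat) ^ x \<le> (\<Sum>e\<in>E. 2 ^ e)"
      using assms(1) by (intro member_le_sum) auto
    hence "(2::nat) ^ x < 2 ^ s" using assms(2)
      by (metis diff_less le_less_trans less_numeral_extra(1) zero_less_numeral zero_less_power)
    thus "x \<in> {..<s}" by simp
  qed
  have "E = {..<s}"
  proof (rule ccontr)
    assume "E \<noteq> {..<s}"
    then obtain x where x: "x < s" "x \<notin> E" using sub by auto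
    have "(\<Sum>e\<in>E. (2::nat) ^ e) \<le> (\<Sum>e\<in>{..<s} - {x}. 2 ^ e)"
      by (rule sum_mono2) (use sub x in auto)
    also have "\<dots> = (\<Sum>e<s. 2 ^ e) - 2 ^ x"
      using x by (simp add: sum_diff1_nat)
    also have "\<dots> < 2 ^ s - 1"
    proof -
      have "(2::nat) ^ x \<le> (\<Sum>e<s. 2 ^ e)" using x by (intro member_le_sum) auto
      moreover have "(1::nat) \<le> 2 ^ x" by simp
      ultimately show ?thesis using geo[of s] by linarith
    qed
    finally show False using assms(2) by simp
  qed
  thus ?thesis by simp
qed

theorem proposition7:
  fixes n m s :: nat and A :: "nat \<Rightarrow> nat \<Rightarrow> nat"
  assumes "binmat n m A"
    and "n \<ge> 1"
    and "s \<le> m"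
    and "row_val m A 0 = 2 ^ s - 1"
    and "zeta1 n m A = n"
  shows "canonical n m A"
  unfolding canonical_def
proof (intro allI impI)
  fix B assume B: "binmat n m B \<and> perm_equiv n m B A"
  have allrows: "\<forall>k<n. row_val m A k = 2 ^ s - 1"
  proof -
    have "{k. k < n \<and> row_val m A k = row_val m A 0} = {..<n}"
      using assms(5) unfolding zeta1_def
      by (metis (no_types, lifting) card_lessThan card_subset_eq finite_lessThan
          lessThan_iff mem_Collect_eq subsetI)
    thus ?thesis using assms(4) by auto
  qed
  have cardA: "card {j. j<m \<and> A k j = 1} = s" if "k<n" for k
  proof -
    let ?S = "{j. j<m \<and> A k j = 1}"
    have S: "?S \<subseteq> {..<m}" by auto
    have "row_val m A k = (\<Sum>j\<in>?S. 2 ^ (m - 1 - j))"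
      using assms(1) that by (intro row_val_ones) (auto simp: binmat_def)
    hence "(\<Sum>e\<in>(\<lambda>j. m - 1 - j) ` ?S. (2::nat) ^ e) = 2 ^ s - 1"
      using reindex(1)[OF S] allrows that by simp
    hence "card ((\<lambda>j. m - 1 - j) ` ?S) = s" by (intro sum_exact) auto
    thus ?thesis using reindex(2)[OF S] by simp
  qed
  obtain \<sigma> \<tau> where st: "bij_betw \<sigma> {..<n} {..<n}" "bij_betw \<tau> {..<m} {..<m}"
      "\<forall>i<n. \<forall>j<m. B i j = A (\<sigma> i) (\<tau> j)"
    using B unfolding perm_equiv_def by blast
  have rowB: "row_val m B i \<ge> 2 ^ s - 1" if i: "i < n" for i
  proof -
    let ?S = "{j. j<m \<and> B i j = 1}"
    have S: "?S \<subseteq> {..<m}" by auto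
    have si: "\<sigma> i < n" using st(1) i by (auto simp: bij_betw_def)
    have img: "\<tau> ` ?S = {j. j<m \<and> A (\<sigma> i) j = 1}"
    proof
      show "\<tau> ` ?S \<subseteq> {j. j<m \<and> A (\<sigma> i) j = 1}"
        using st i by (auto simp: bij_betw_def)
    next
      show "{j. j<m \<and> A (\<sigma> i) j = 1} \<subseteq> \<tau> ` ?S"
      proof
        fix j assume j: "j \<in> {j. j<m \<and> A (\<sigma> i) j = 1}"
        then obtain j' where "j' < m" "\<tau> j' = j" using st(2)
          by (metis (no_types, lifting) bij_betw_def imageE lessThan_iff mem_Collect_eq)
        thus "j \<in> \<tau> ` ?S" using j st(3) i by auto
      qed
    qed
    have "card ?S = card (\<tau> ` ?S)"
      by (rule card_image[symmetric]) (use st(2) in \<open>auto simp: bij_betw_def inj_on_def\<close>)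
    hence cS: "card ?S = s" using img cardA[OF si] by simp
    have "row_val m B i = (\<Sum>j\<in>?S. 2 ^ (m - 1 - j))"
      using B i by (intro row_val_ones) (auto simp: binmat_def)
    also have "\<dots> = (\<Sum>e\<in>(\<lambda>j. m - 1 - j) ` ?S. (2::nat) ^ e)" using reindex(1)[OF S] .
    also have "\<dots> \<ge> 2 ^ card ((\<lambda>j. m - 1 - j) ` ?S) - 1" by (intro sum_lower) auto
    finally have "row_val m B i \<ge> 2 ^ card ((\<lambda>j. m - 1 - j) ` ?S) - 1" .
    thus ?thesis unfolding reindex(2)[OF S] cS .
  qed
  show "lexordp_eq (rtuple n m A) (rtuple n m B)"
  proof (rule lex_pointwise)
    show "list_all2 (\<le>) (rtuple n m A) (rtuple n m B)"
      unfolding rtuple_def list_all2_conv_all_nth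
    proof (intro conjI allI impI)
      fix i assume "i < length (map (row_val m A) [0..<n])"
      hence i: "i < n" by simp
      show "map (row_val m A) [0..<n] ! i \<le> map (row_val m B) [0..<n] ! i"
        using i allrows rowB[OF i] by simp
    qed simp
  qed
qed

end
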